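(* Let $q$ be an odd prime power, $g\ge 1$, and let $\mathcal{Y}$ be the hyperelliptic curve over $\mathbb{F}_q$ with affine equation $y^2=f(x)$, $f(x)=x^{2g+1}+a_{2g}x^{2g}+\dots+a_0\in\mathbb{F}_q[x]$, of genus $g$. Let $X,T$ be positive integers, let $\gamma=\#\{z\in\mathbb{F}_q: f(z)=0\}$, and let $J^{\mathcal{Y}}_{\max}$ be the largest integer $J$ for which there exist pairwise distinct $\lambda_1,\dots,\lambda_J\in\mathbb{F}_q$ with $f(\lambda_j)\ne0$ for all $j$ such that, setting $h=\prod_{j=1}^J(x-\lambda_j)$, the curve $\mathcal{Y}$ has at least $2J+X+T+6g+2$ affine $\mathbb{F}_q$-rational points $P$ with $y(P)\ne 0$ and $h(P)\ne0$. Then $$J^{\mathcal{Y}}_{\max}=\begin{cases}\left\lfloor\dfrac{2q-(X+T+6g+2\gamma+2)}{4}\right\rfloor & \text{if } \#\mathcal{Y}(\mathbb{F}_q)\ge q+3g+\dfrac{X+T+4}{2},\\[2mm] \left\lfloor\dfrac{\#\mathcal{Y}(\mathbb{F}_q)-(X+T+6g+3+\gamma)}{2}\right\rfloor & \text{otherwise.}\end{cases}$$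
   Context: $\#\mathcal{Y}(\mathbb{F}_q)$ counts all $\mathbb{F}_q$-rational points of (the non-singular model of) $\mathcal{Y}$, including its unique point at infinity $P_\infty$. Interpretation: in the known XSTPIR construction from hyperelliptic curves, with $L=2J-g$ and $N=L+X+T+6g+2$, one needs $N+g=2J+X+T+6g+2$ rational points different from $P_\infty$, not on $y=0$ and not zeros of $h$; this yields an $X$-secure $T$-private PIR scheme of rate $L/N$, so $J^{\mathcal{Y}}_{\max}$ determines the maximal rate of that construction. *)

theory Defs
  imports "HOL-Computational_Algebra.Computational_Algebra"
begin

definition affine_points :: "'a::field poly \<Rightarrow> ('a \<times> 'a) set" where
  "affine_points f = {(x, y). y ^ 2 = poly f x}"

text \<open>Number of F_q-rational points of the nonsingular model: affine points plus
  the unique point at infinity (degree of f is odd).\<close>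
definition num_points :: "'a::{field,finite} poly \<Rightarrow> nat" where
  "num_points f = card (affine_points f) + 1"

definition admissible_J :: "'a::{field,finite} poly \<Rightarrow> nat \<Rightarrow> nat \<Rightarrow> nat \<Rightarrow> nat \<Rightarrow> bool" where
  "admissible_J f g X T J \<longleftrightarrow>
     (\<exists>L::'a set. card L = J \<and> (\<forall>l\<in>L. poly f l \<noteq> 0) \<and>
        card {(x, y). (x, y) \<in> affine_points f \<and> y \<noteq> 0 \<and> (\<Prod>l\<in>L. x - l) \<noteq> 0}
          \<ge> 2 * J + X + T + 6 * g + 2)"

end

theory Submission
  imports Defs
begin

lemma two_ne_zero_finite:
  assumes "odd (card (UNIV :: 'a::{field,finite} set))"
  shows "(2::'a) \<noteq> 0"
proof
  assume h2: "(2::'a) = 0"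
  let ?q = "card (UNIV :: 'a set)"
  have "(\<Sum>x\<in>(UNIV::'a set). x) = (\<Sum>x\<in>UNIV. x + 1)"
    by (rule sum.reindex_bij_witness[of _ "\<lambda>y. y + 1" "\<lambda>y. y - 1"]) auto
  also have "\<dots> = (\<Sum>x\<in>(UNIV::'a set). x) + of_nat ?q"
    by (simp add: sum.distrib)
  finally have q0: "(of_nat ?q :: 'a) = 0" by simp
  obtain k where k: "?q = 2 * k + 1" using assms oddE by blast
  have "(of_nat ?q :: 'a) = 2 * of_nat k + 1" by (simp add: k)
  also have "\<dots> = 1" using h2 by simp
  finally show False using q0 by simp
qed

lemma card_sqrts:
  fixes c :: "'a::{field,finite}"
  assumes "(2::'a) \<noteq> 0" "c \<noteq> 0"
  shows "card {y. y ^ 2 = c} = (if \<exists>y. y ^ 2 = c then 2 else 0)"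
proof (cases "\<exists>y. y ^ 2 = c")
  case True
  then obtain y0 where y0: "y0 ^ 2 = c" by blast
  have "{y. y ^ 2 = c} = {y0, -y0}"
    using y0 power2_eq_iff[of _ y0] by auto
  moreover have "y0 \<noteq> -y0"
  proof
    assume "y0 = - y0"
    then have "2 * y0 = 0" by (simp add: algebra_simps)
    with assms y0 show False by simp
  qed
  ultimately show ?thesis using True by simp
next
  case False
  then show ?thesis by simp
qed

lemma arith_main:
  fixes s n K Jm :: int
  assumes nn: "s \<ge> 0" "n \<ge> 0" "K \<ge> 0" "Jm \<ge> 0"
    and QJ: "Jm \<le> s + n" "2 * s \<ge> 2 * Jm + K + 2 * max 0 (Jm - n)"
    and G: "\<And>J. J \<ge> 0 \<Longrightarrow> J \<le> s + n \<Longrightarrow> 2 * s \<ge> 2 * J + K + 2 * max 0 (J - n) \<Longrightarrow> J \<le> Jm"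
  shows "Jm = (if 2 * s \<ge> K + 2 * n then (2 * s + 2 * n - K) div 4 else (2 * s - K) div 2)"
proof (cases "2 * s \<ge> K + 2 * n")
  case True
  define c where "c = (2 * s + 2 * n - K) div 4"
  have c1: "4 * c \<le> 2 * s + 2 * n - K" "2 * s + 2 * n - K < 4 * c + 4"
    unfolding c_def by linarith+
  have "c \<le> Jm" using c1 True nn by (intro G) (auto simp: max_def)
  moreover have "Jm \<le> c" using c1 True QJ nn by (auto simp: max_def split: if_splits)
  ultimately show ?thesis using True c_def by simp
next
  case False
  define c where "c = (2 * s - K) div 2"
  have c1: "2 * c \<le> 2 * s - K" "2 * s - K < 2 * c + 2"
    unfolding c_def by linarith+
  have jn: "Jm \<le> n" using QJ False by (auto simp: max_def split: if_splits)
  have "2 * Jm + K \<le> 2 * s" using QJ jn by simp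
  then have c0: "c \<ge> 0" using c1 nn by linarith
  have "c \<le> Jm" using c1 c0 False nn jn QJ by (intro G) (auto simp: max_def)
  moreover have "Jm \<le> c" using c1 False QJ jn nn by (auto simp: max_def split: if_splits)
  ultimately show ?thesis using False c_def by simp
qed

theorem theorem4p4:
  fixes f :: "'a::{field,finite} poly"
    and g X T Jmax :: nat
  assumes q_odd: "odd (card (UNIV :: 'a set))"
    and g_pos: "g \<ge> 1"
    and f_monic: "lead_coeff f = 1"
    and f_deg: "degree f = 2 * g + 1"
    and f_sqfree: "squarefree f"
    and X_pos: "X > 0" and T_pos: "T > 0"
    and Jmax_adm: "admissible_J f g X T Jmax"
    and Jmax_greatest: "\<forall>J. admissible_J f g X T J \<longrightarrow> J \<le> Jmax"
  shows "int Jmax =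
    (let q = card (UNIV :: 'a set); \<gamma> = card {z::'a. poly f z = 0}; N = num_points f in
     if real N \<ge> real q + 3 * real g + (real X + real T + 4) / 2
     then \<lfloor>(2 * real q - (real X + real T + 6 * real g + 2 * real \<gamma> + 2)) / 4\<rfloor>
     else \<lfloor>(real N - (real X + real T + 6 * real g + 3 + real \<gamma>)) / 2\<rfloor>)"
proof -
  have two: "(2::'a) \<noteq> 0" using two_ne_zero_finite[OF q_odd] .
  define sq where "sq x = {y::'a. y ^ 2 = poly f x}" for x
  define R where "R = {z::'a. poly f z = 0}"
  define S where "S = {x::'a. poly f x \<noteq> 0 \<and> (\<exists>y. y ^ 2 = poly f x)}"
  define M where "M = {x::'a. poly f x \<noteq> 0 \<and> \<not> (\<exists>y. y ^ 2 = poly f x)}"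
  define q where "q = card (UNIV :: 'a set)"
  define \<gamma> where "\<gamma> = card R"
  define s where "s = card S"
  define n where "n = card M"
  define K where "K = X + T + 6 * g + 2"
  have cardsq: "card (sq x) = of_bool (x \<in> R) + 2 * of_bool (x \<in> S)" for x
  proof (cases "poly f x = 0")
    case True
    then have "sq x = {0}" by (auto simp: sq_def)
    then show ?thesis using True by (simp add: R_def S_def)
  next
    case False
    then show ?thesis using card_sqrts[OF two False] by (simp add: sq_def R_def S_def)
  qed
  have disj: "R \<inter> S = {}" "R \<inter> M = {}" "S \<inter> M = {}" by (auto simp: R_def S_def M_def)
  have un: "R \<union> S \<union> M = UNIV" by (auto simp: R_def S_def M_def)
  have qeq: "q = \<gamma> + s + n"
  proof -
    have "card (R \<union> S \<union> M) = card (R \<union> S) + card M"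
      by (rule card_Un_disjoint) (use disj in auto)
    also have "card (R \<union> S) = card R + card S"
      by (rule card_Un_disjoint) (use disj in auto)
    finally show ?thesis using un by (simp add: q_def \<gamma>_def s_def n_def)
  qed
  have aff: "affine_points f = Sigma UNIV sq" by (auto simp: affine_points_def sq_def)
  have Neq: "num_points f = \<gamma> + 2 * s + 1"
  proof -
    have "card (Sigma UNIV sq) = (\<Sum>x\<in>UNIV. card (sq x))"
      by (rule card_SigmaI) auto
    also have "\<dots> = (\<Sum>x\<in>UNIV. of_bool (x \<in> R)) + 2 * (\<Sum>x\<in>UNIV. of_bool (x \<in> S))"
      by (simp add: cardsq sum.distrib sum_distrib_left)
    also have "\<dots> = \<gamma> + 2 * s"
      by (simp add: sum_of_bool_eq \<gamma>_def s_def)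
    finally show ?thesis by (simp add: num_points_def aff)
  qed
  have ptset: "{(x, y). (x, y) \<in> affine_points f \<and> y \<noteq> 0 \<and> (\<Prod>l\<in>L. x - l) \<noteq> 0}
      = Sigma (S - L) sq" for L :: "'a set"
  proof -
    have pz: "(\<Prod>l\<in>L. x - l) \<noteq> 0 \<longleftrightarrow> x \<notin> L" for x
      by (simp add: prod_zero_iff)
    show ?thesis
      by (auto simp: pz affine_points_def sq_def S_def)
  qed
  have ptcard: "card (Sigma (S - L) sq) = 2 * card (S - L)" for L
  proof -
    have "card (Sigma (S - L) sq) = (\<Sum>x\<in>S - L. card (sq x))"
      by (rule card_SigmaI) auto
    also have "\<dots> = (\<Sum>x\<in>S - L. 2)"
      by (rule sum.cong) (use disj in \<open>auto simp: cardsq\<close>)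
    finally show ?thesis by simp
  qed
  have adm_iff: "admissible_J f g X T J \<longleftrightarrow> J \<le> s + n \<and> 2 * s \<ge> 2 * J + K + 2 * (J - n)" for J
  proof
    assume "admissible_J f g X T J"
    then obtain L where L: "card L = J" "\<forall>l\<in>L. poly f l \<noteq> 0"
      "2 * card (S - L) \<ge> 2 * J + K"
      unfolding admissible_J_def ptset ptcard K_def by (auto simp: add.assoc)
    have LSM: "L = (L \<inter> S) \<union> (L \<inter> M)" using L(2) un by (auto simp: R_def)
    have "card L = card (L \<inter> S) + card (L \<inter> M)"
      by (subst LSM, rule card_Un_disjoint) (use disj in auto)
    moreover have "card (L \<inter> S) \<le> s" "card (L \<inter> M) \<le> n"
      by (auto simp: s_def n_def intro: card_mono)
    moreover have "card (S - L) = s - card (L \<inter> S)"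
      by (metis card_Diff_subset_Int finite Int_commute s_def)
    ultimately show "J \<le> s + n \<and> 2 * s \<ge> 2 * J + K + 2 * (J - n)"
      using L by linarith
  next
    assume H: "J \<le> s + n \<and> 2 * s \<ge> 2 * J + K + 2 * (J - n)"
    obtain A where A: "A \<subseteq> M" "card A = min J n"
      using obtain_subset_with_card_n[of "min J n" M] by (auto simp: n_def)
    obtain B where B: "B \<subseteq> S" "card B = J - min J n"
    proof -
      have "J - min J n \<le> card S" using H unfolding s_def by linarith
      then show ?thesis using obtain_subset_with_card_n[of "J - min J n" S] that by blast
    qed
    have "card (A \<union> B) = J"
      using card_Un_disjoint[of A B] A B disj by fastforce
    moreover have "\<forall>l\<in>A \<union> B. poly f l \<noteq> 0" using A B by (auto simp: S_def M_def)
    moreover have "S - (A \<union> B) = S - B" using A disj by auto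
    moreover have "card (S - B) = s - (J - min J n)"
      using B by (simp add: card_Diff_subset s_def)
    ultimately show "admissible_J f g X T J"
      unfolding admissible_J_def ptset ptcard K_def
      using H K_def by (intro exI[of _ "A \<union> B"]) auto
  qed
  have QJ: "Jmax \<le> s + n \<and> 2 * s \<ge> 2 * Jmax + K + 2 * (Jmax - n)"
    using Jmax_adm adm_iff by blast
  have QG: "\<And>J. J \<le> s + n \<and> 2 * s \<ge> 2 * J + K + 2 * (J - n) \<Longrightarrow> J \<le> Jmax"
    using Jmax_greatest adm_iff by blast
  define c1 where "c1 = (2 * int q - (int X + int T + 6 * int g + 2 * int \<gamma> + 2)) div 4"
  define c2 where "c2 = (int (num_points f) - (int X + int T + 6 * int g + 3 + int \<gamma>)) div 2"
  have f1: "\<lfloor>(2 * real q - (real X + real T + 6 * real g + 2 * real \<gamma> + 2)) / 4\<rfloor> = c1"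
  proof -
    have "(2 * real q - (real X + real T + 6 * real g + 2 * real \<gamma> + 2)) / 4
      = real_of_int (2 * int q - (int X + int T + 6 * int g + 2 * int \<gamma> + 2)) / real_of_int 4"
      by simp
    then show ?thesis unfolding c1_def by (simp only: floor_divide_of_int_eq)
  qed
  have f2: "\<lfloor>(real (num_points f) - (real X + real T + 6 * real g + 3 + real \<gamma>)) / 2\<rfloor> = c2"
  proof -
    have "(real (num_points f) - (real X + real T + 6 * real g + 3 + real \<gamma>)) / 2
      = real_of_int (int (num_points f) - (int X + int T + 6 * int g + 3 + int \<gamma>)) / real_of_int 2"
      by simp
    then show ?thesis unfolding c2_def by (simp only: floor_divide_of_int_eq)
  qed
  have cond: "(real (num_points f) \<ge> real q + 3 * real g + (real X + real T + 4) / 2)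
     \<longleftrightarrow> 2 * int (num_points f) \<ge> 2 * int q + 6 * int g + int X + int T + 4"
  proof -
    have "(real (num_points f) \<ge> real q + 3 * real g + (real X + real T + 4) / 2)
       \<longleftrightarrow> 2 * real (num_points f) \<ge> 2 * real q + 6 * real g + real X + real T + 4"
      by (simp add: field_simps)
    also have "\<dots> \<longleftrightarrow> 2 * int (num_points f) \<ge> 2 * int q + 6 * int g + int X + int T + 4"
    proof -
      have a: "real (2*q+6*g+X+T+4) \<le> real (2*num_points f) \<longleftrightarrow> 2*q+6*g+X+T+4 \<le> 2*num_points f"
        by (rule of_nat_le_iff)
      have b: "int (2*q+6*g+X+T+4) \<le> int (2*num_points f) \<longleftrightarrow> 2*q+6*g+X+T+4 \<le> 2*num_points f"
        by (rule of_nat_le_iff)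
      show ?thesis using a b by simp
    qed
    finally show ?thesis .
  qed
  have main: "int Jmax = (if 2 * int (num_points f) \<ge> 2 * int q + 6 * int g + int X + int T + 4
      then c1 else c2)"
  proof -
    have c1v: "c1 = (2 * int s + 2 * int n - int K) div 4"
      unfolding c1_def qeq K_def by simp
    have c2v: "c2 = (2 * int s - int K) div 2"
      unfolding c2_def Neq K_def by simp
    have cnd: "(2 * int (num_points f) \<ge> 2 * int q + 6 * int g + int X + int T + 4)
       \<longleftrightarrow> 2 * int s \<ge> int K + 2 * int n"
      unfolding Neq qeq K_def by (simp; linarith)
    have QJa: "int Jmax \<le> int s + int n" using QJ by linarith
    have QJb: "2 * int s \<ge> 2 * int Jmax + int K + 2 * max 0 (int Jmax - int n)"
    proof (cases "Jmax \<le> n")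
      case True then show ?thesis using QJ by (simp add: max_def)
    next
      case False
      then have "int (Jmax - n) = int Jmax - int n" by simp
      then show ?thesis using QJ False by (simp add: max_def) linarith
    qed
    note QJ' = QJa QJb
    have G': "J \<le> int Jmax" if "J \<ge> 0" "J \<le> int s + int n"
      "2 * int s \<ge> 2 * J + int K + 2 * max 0 (J - int n)" for J
    proof -
      have "nat J \<le> s + n \<and> 2 * s \<ge> 2 * nat J + K + 2 * (nat J - n)"
        using that by (auto simp: max_def split: if_splits)
      then have "nat J \<le> Jmax" by (rule QG)
      then show ?thesis using that by linarith
    qed
    show ?thesis unfolding cnd c1v c2v
      by (rule arith_main[OF _ _ _ _ QJ' G']) simp_all
  qed
  show ?thesis
    unfolding Let_def q_def[symmetric] R_def[symmetric] \<gamma>_def[symmetric] f1 f2 cond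
    using main .
qed

end
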